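(* Let $(Q,\cdot)$ be a quasigroup. Then: (1) if $Q$ satisfies $x(y(zy))=(x(yz))y$ for all $x,y,z$ (LG3-quasigroup), then $Q$ is a right loop; (2) if $Q$ satisfies $(xx)(yz)=((xx)y)z$ for all $x,y,z$ (LNQ-quasigroup), then $Q$ is a left loop; (3) if $Q$ satisfies $x(y(yz))=(x(yy))z$ for all $x,y,z$ (LC4-quasigroup), then $Q$ is a right loop; (4) if $Q$ satisfies $x(y(xz))=(x(yx))z$ for all $x,y,z$ (left Bol quasigroup), then $Q$ is a right loop; (5) if $Q$ satisfies $x(xy)=(xx)y$ for all $x,y$ (left alternative quasigroup), then $Q$ is a left loop.
   Context: A quasigroup is a set $Q$ with a binary operation $\cdot$ (written as juxtaposition) such that for all $a,b\in Q$ each of the equations $ax=b$ and $ya=b$ has a unique solution in $Q$. A quasigroup $Q$ is a left loop if there is $e\in Q$ with $ea=a$ for all $a\in Q$, and a right loop if there is $e\in Q$ with $ae=a$ for all $a\in Q$. *)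

theory Defs
  imports Main
begin

definition quasigroup :: "'a set \<Rightarrow> ('a \<Rightarrow> 'a \<Rightarrow> 'a) \<Rightarrow> bool" where
  "quasigroup Q m \<longleftrightarrow>
     (\<forall>a\<in>Q. \<forall>b\<in>Q. m a b \<in> Q) \<and>
     (\<forall>a\<in>Q. \<forall>b\<in>Q. \<exists>!x. x \<in> Q \<and> m a x = b) \<and>
     (\<forall>a\<in>Q. \<forall>b\<in>Q. \<exists>!y. y \<in> Q \<and> m y a = b)"

definition left_loop :: "'a set \<Rightarrow> ('a \<Rightarrow> 'a \<Rightarrow> 'a) \<Rightarrow> bool" where
  "left_loop Q m \<longleftrightarrow> quasigroup Q m \<and> (\<exists>e\<in>Q. \<forall>a\<in>Q. m e a = a)"

definition right_loop :: "'a set \<Rightarrow> ('a \<Rightarrow> 'a \<Rightarrow> 'a) \<Rightarrow> bool" where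
  "right_loop Q m \<longleftrightarrow> quasigroup Q m \<and> (\<exists>e\<in>Q. \<forall>a\<in>Q. m a e = a)"

end

theory Submission
  imports Defs
begin

lemma qg_p1: "quasigroup Q m \<Longrightarrow> \<forall>a\<in>Q. \<forall>b\<in>Q. m a b \<in> Q"
  unfolding quasigroup_def by (rule conjunct1)
lemma qg_p2: "quasigroup Q m \<Longrightarrow> \<forall>a\<in>Q. \<forall>b\<in>Q. \<exists>!x. x \<in> Q \<and> m a x = b"
  unfolding quasigroup_def by (drule conjunct2, rule conjunct1)
lemma qg_p3: "quasigroup Q m \<Longrightarrow> \<forall>a\<in>Q. \<forall>b\<in>Q. \<exists>!y. y \<in> Q \<and> m y a = b"
  unfolding quasigroup_def by (drule conjunct2, rule conjunct2)

lemma qg_closed: "quasigroup Q m \<Longrightarrow> a \<in> Q \<Longrightarrow> b \<in> Q \<Longrightarrow> m a b \<in> Q"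
  using qg_p1 by blast

lemma qg_lsol: "quasigroup Q m \<Longrightarrow> a \<in> Q \<Longrightarrow> b \<in> Q \<Longrightarrow> \<exists>x\<in>Q. m a x = b"
proof -
  assume "quasigroup Q m" "a \<in> Q" "b \<in> Q"
  hence "\<exists>!x. x \<in> Q \<and> m a x = b" using qg_p2 by blast
  thus ?thesis by (elim ex1E) blast
qed

lemma qg_rsol: "quasigroup Q m \<Longrightarrow> a \<in> Q \<Longrightarrow> b \<in> Q \<Longrightarrow> \<exists>y\<in>Q. m y a = b"
proof -
  assume "quasigroup Q m" "a \<in> Q" "b \<in> Q"
  hence "\<exists>!x. x \<in> Q \<and> m x a = b" using qg_p3 by blast
  thus ?thesis by (elim ex1E) blast
qed

lemma qg_lcanc: "quasigroup Q m \<Longrightarrow> a \<in> Q \<Longrightarrow> x \<in> Q \<Longrightarrow> y \<in> Q \<Longrightarrow> m a x = m a y \<Longrightarrow> x = y"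
proof -
  assume q: "quasigroup Q m" and h: "a \<in> Q" "x \<in> Q" "y \<in> Q" "m a x = m a y"
  have "m a y \<in> Q" using qg_closed[OF q h(1,3)] .
  hence "\<exists>!u. u \<in> Q \<and> m a u = m a y" using qg_p2[OF q] h(1) by blast
  thus "x = y" using h by (elim ex1E) blast
qed

lemma qg_rcanc: "quasigroup Q m \<Longrightarrow> a \<in> Q \<Longrightarrow> x \<in> Q \<Longrightarrow> y \<in> Q \<Longrightarrow> m x a = m y a \<Longrightarrow> x = y"
proof -
  assume q: "quasigroup Q m" and h: "a \<in> Q" "x \<in> Q" "y \<in> Q" "m x a = m y a"
  have "m y a \<in> Q" using qg_closed[OF q h(3,1)] .
  hence "\<exists>!u. u \<in> Q \<and> m u a = m y a" using qg_p3[OF q] h(1) by blast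
  thus "x = y" using h by (elim ex1E) blast
qed

theorem mainTheorem4:
  fixes Q :: "'a set" and m :: "'a \<Rightarrow> 'a \<Rightarrow> 'a"
  assumes "quasigroup Q m" and "Q \<noteq> {}"
  shows "((\<forall>x\<in>Q. \<forall>y\<in>Q. \<forall>z\<in>Q. m x (m y (m z y)) = m (m x (m y z)) y) \<longrightarrow> right_loop Q m)
       \<and> ((\<forall>x\<in>Q. \<forall>y\<in>Q. \<forall>z\<in>Q. m (m x x) (m y z) = m (m (m x x) y) z) \<longrightarrow> left_loop Q m)
       \<and> ((\<forall>x\<in>Q. \<forall>y\<in>Q. \<forall>z\<in>Q. m x (m y (m y z)) = m (m x (m y y)) z) \<longrightarrow> right_loop Q m)
       \<and> ((\<forall>x\<in>Q. \<forall>y\<in>Q. \<forall>z\<in>Q. m x (m y (m x z)) = m (m x (m y x)) z) \<longrightarrow> right_loop Q m)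
       \<and> ((\<forall>x\<in>Q. \<forall>y\<in>Q. m x (m x y) = m (m x x) y) \<longrightarrow> left_loop Q m)"
proof -
  note qg = assms(1)
  note cl = qg_closed[OF qg] and ls = qg_lsol[OF qg] and rs = qg_rsol[OF qg]
    and lc = qg_lcanc[OF qg] and rc = qg_rcanc[OF qg]
  obtain y where y: "y \<in> Q" using assms(2) by blast
  have 1: "right_loop Q m" if H: "\<forall>x\<in>Q. \<forall>y\<in>Q. \<forall>z\<in>Q. m x (m y (m z y)) = m (m x (m y z)) y"
  proof -
    obtain t where t: "t \<in> Q" "m y t = y" using ls[OF y y] by blast
    obtain z where z: "z \<in> Q" "m z y = t" using rs[OF y t(1)] by blast
    have "\<forall>x\<in>Q. m x (m y z) = x"
    proof
      fix x assume x: "x \<in> Q"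
      have "m x y = m (m x (m y z)) y" using H[rule_format, OF x y z(1)] z(2) t(2) by simp
      thus "m x (m y z) = x" using rc[OF y _ x] x y z cl by simp
    qed
    thus ?thesis unfolding right_loop_def using qg cl y z by blast
  qed
  have 2: "left_loop Q m" if H: "\<forall>x\<in>Q. \<forall>y\<in>Q. \<forall>z\<in>Q. m (m x x) (m y z) = m (m (m x x) y) z"
  proof -
    have a: "m y y \<in> Q" using cl y by blast
    obtain e where e: "e \<in> Q" "m (m y y) e = m y y" using ls[OF a a] by blast
    have "\<forall>w\<in>Q. m e w = w"
    proof
      fix w assume w: "w \<in> Q"
      have "m (m y y) (m e w) = m (m y y) w" using H[rule_format, OF y e(1) w] e(2) by simp
      thus "m e w = w" using lc[OF a _ w] cl e w y by simp
    qed
    thus ?thesis unfolding left_loop_def using qg e by blast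
  qed
  have 3: "right_loop Q m" if H: "\<forall>x\<in>Q. \<forall>y\<in>Q. \<forall>z\<in>Q. m x (m y (m y z)) = m (m x (m y y)) z"
  proof -
    have a: "m y y \<in> Q" using cl y by blast
    obtain e where e: "e \<in> Q" "m y e = y" using ls[OF y y] by blast
    have "\<forall>w\<in>Q. m w e = w"
    proof
      fix w assume w: "w \<in> Q"
      obtain x where x: "x \<in> Q" "m x (m y y) = w" using rs[OF a w] by blast
      have "w = m x (m y y)" using x(2) by (rule sym)
      also have "\<dots> = m x (m y (m y e))" by (simp only: e(2))
      also have "\<dots> = m (m x (m y y)) e" using H x(1) y e(1) by blast
      also have "\<dots> = m w e" by (simp only: x(2))
      finally show "m w e = w" by (rule sym)
    qed
    thus ?thesis unfolding right_loop_def using qg e by blast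
  qed
  have 4: "right_loop Q m" if H: "\<forall>x\<in>Q. \<forall>y\<in>Q. \<forall>z\<in>Q. m x (m y (m x z)) = m (m x (m y x)) z"
  proof -
    obtain e where e: "e \<in> Q" "m y e = y" using ls[OF y y] by blast
    have "\<forall>w\<in>Q. m w e = w"
    proof
      fix w assume w: "w \<in> Q"
      obtain u where u: "u \<in> Q" "m y u = w" using ls[OF y w] by blast
      obtain v where v: "v \<in> Q" "m v y = u" using rs[OF y u(1)] by blast
      have "w = m y (m v y)" using u(2) v(2) by simp
      also have "\<dots> = m y (m v (m y e))" by (simp only: e(2))
      also have "\<dots> = m (m y (m v y)) e" using H y v(1) e(1) by blast
      also have "\<dots> = m w e" using u(2) v(2) by simp
      finally show "m w e = w" by (rule sym)
    qed
    thus ?thesis unfolding right_loop_def using qg e by blast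
  qed
  have 5: "left_loop Q m" if H: "\<forall>x\<in>Q. \<forall>y\<in>Q. m x (m x y) = m (m x x) y"
  proof -
    obtain f where f: "f \<in> Q" "m f y = y" using rs[OF y y] by blast
    have "m (m f f) y = m f (m f y)" using H f(1) y by metis
    also have "\<dots> = m f y" by (simp only: f(2))
    finally have ff: "m f f = f" using rc[OF y _ f(1)] cl f by blast
    have "\<forall>w\<in>Q. m f w = w"
    proof
      fix w assume w: "w \<in> Q"
      have "m f (m f w) = m (m f f) w" using H f(1) w by blast
      also have "\<dots> = m f w" by (simp only: ff)
      finally show "m f w = w" using lc[OF f(1) _ w] cl f w by blast
    qed
    thus ?thesis unfolding left_loop_def using qg f by blast
  qed
  show ?thesis using 1 2 3 4 5 by blast
qed

end
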